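(* Let $(\mathcal V,[\cdot,\cdots,\cdot],S)$ be a generalized metric $n$-Leibniz algebra, let $\mathfrak g=\mathrm{Im}\,D\subset\mathfrak{gl}(\mathcal V)$ with commutator bracket $[\cdot,\cdot]_C$, and let $\omega$ be the bilinear form on $\mathfrak g$ given by $\omega(D(u_1,\dots,u_{n-1}),D(v_1,\dots,v_{n-1}))=S([u_1,\dots,u_{n-1},v_1],v_2,\dots,v_{n-1})$. Then $(\mathfrak g,\mathcal V,\mathrm{Id})$ is a Lie triple data: $(\mathfrak g,[\cdot,\cdot]_C,\omega)$ is a metric Lie algebra and the inclusion $\mathrm{Id}:\mathfrak g\to\mathfrak{gl}(\mathcal V)$ is a faithful generalized orthogonal representation on $(\mathcal V,S)$.
   Context: All vector spaces are finite-dimensional over $\mathbb R$. An $n$-Leibniz algebra is a vector space $\mathcal V$ with an $n$-linear map $[\cdot,\cdots,\cdot]$ satisfying $[u_1,\dots,u_{n-1},[v_1,\dots,v_n]]=\sum_{i=1}^n[v_1,\dots,[u_1,\dots,u_{n-1},v_i],\dots,v_n]$. A symmetric $S\in\mathrm{Sym}^{n-1}(\mathcal V^* )$ is non-degenerate if $S(u,v_1,\dots,v_{n-2})=0$ for all $v_j$ implies $u=0$. A generalized metric $n$-Leibniz algebra is an $n$-Leibniz algebra with a symmetric non-degenerate $S\in\mathrm{Sym}^{n-1}(\mathcal V^* )$ satisfying (a) unitarity: $\sum_{i=1}^{n-1}S(v_1,\dots,[u_1,\dots,u_{n-1},v_i],\dots,v_{n-1})=0$ and (b) symmetry: $S([u_1,\dots,u_{n-1},v_1],v_2,\dots,v_{n-1})=S([v_1,\dots,v_{n-1},u_1],u_2,\dots,u_{n-1})$.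 $D(u_1,\dots,u_{n-1})\in\mathfrak{gl}(\mathcal V)$ is $u_n\mapsto[u_1,\dots,u_{n-1},u_n]$, and $\mathrm{Im}\,D$ is the linear span of these. A metric Lie algebra is a Lie algebra with a symmetric non-degenerate bilinear form $\omega$ with $\omega([x,y],z)=-\omega(y,[x,z])$. A representation $\rho:\mathfrak g\to\mathfrak{gl}(\mathcal V)$ is generalized orthogonal (w.r.t. $S$) if $\sum_{i=1}^{n-1}S(w_1,\dots,\rho(x)w_i,\dots,w_{n-1})=0$ for all $x,w_j$. A Lie triple data $(\mathfrak g,\mathcal V,\rho)$ consists of a metric Lie algebra $(\mathfrak g,[\cdot,\cdot],\omega)$, a vector space $\mathcal V$ with a symmetric non-degenerate $S\in\mathrm{Sym}^{n-1}(\mathcal V^* )$, and a faithful (injective) generalized orthogonal representation $\rho:\mathfrak g\to\mathfrak{gl}(\mathcal V)$. *)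

theory Defs
  imports "HOL-Analysis.Analysis"
begin

text \<open>Multilinear maps of arity k are modelled as functions on lists; only their
values on lists of length k matter. Elements of gl(V) are functions 'v \<Rightarrow> 'v
with the pointwise vector-space structure.\<close>

definition multilinear :: "nat \<Rightarrow> ('v::real_vector list \<Rightarrow> 'w::real_vector) \<Rightarrow> bool" where
  "multilinear k f \<longleftrightarrow>
     (\<forall>xs i. length xs = k \<longrightarrow> i < k \<longrightarrow> linear (\<lambda>y. f (xs[i := y])))"

definition symmetric_form :: "nat \<Rightarrow> ('v::real_vector list \<Rightarrow> real) \<Rightarrow> bool" where
  "symmetric_form k S \<longleftrightarrow> multilinear k S \<and>
     (\<forall>xs ys. length xs = k \<longrightarrow> mset xs = mset ys \<longrightarrow> S xs = S ys)"

text \<open>Non-degeneracy of S in Sym^k(V*) (here k = n-1, so the tail has length k-1).\<close>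
definition nondegenerate_form :: "nat \<Rightarrow> ('v::real_vector list \<Rightarrow> real) \<Rightarrow> bool" where
  "nondegenerate_form k S \<longleftrightarrow>
     (\<forall>u. (\<forall>vs. length vs = k - 1 \<longrightarrow> S (u # vs) = 0) \<longrightarrow> u = 0)"

definition n_leibniz :: "nat \<Rightarrow> ('v::real_vector list \<Rightarrow> 'v) \<Rightarrow> bool" where
  "n_leibniz n br \<longleftrightarrow> multilinear n br \<and>
     (\<forall>us vs. length us = n - 1 \<longrightarrow> length vs = n \<longrightarrow>
        br (us @ [br vs]) = (\<Sum>i<n. br (vs[i := br (us @ [vs ! i])])))"

definition gen_metric_leibniz ::
    "nat \<Rightarrow> ('v::real_vector list \<Rightarrow> 'v) \<Rightarrow> ('v list \<Rightarrow> real) \<Rightarrow> bool" where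
  "gen_metric_leibniz n br S \<longleftrightarrow>
     n_leibniz n br \<and> symmetric_form (n - 1) S \<and> nondegenerate_form (n - 1) S \<and>
     \<comment> \<open>(a) unitarity\<close>
     (\<forall>us vs. length us = n - 1 \<longrightarrow> length vs = n - 1 \<longrightarrow>
        (\<Sum>i<n - 1. S (vs[i := br (us @ [vs ! i])])) = 0) \<and>
     \<comment> \<open>(b) symmetry\<close>
     (\<forall>us vs. length us = n - 1 \<longrightarrow> length vs = n - 1 \<longrightarrow>
        S (br (us @ [hd vs]) # tl vs) = S (br (vs @ [hd us]) # tl us))"

definition Dop :: "('v list \<Rightarrow> 'v) \<Rightarrow> 'v list \<Rightarrow> 'v \<Rightarrow> 'v" where
  "Dop br us = (\<lambda>w. br (us @ [w]))"

definition ImD :: "nat \<Rightarrow> ('v::real_vector list \<Rightarrow> 'v) \<Rightarrow> ('v \<Rightarrow> 'v) set" where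
  "ImD n br = {X. \<exists>m (c::nat \<Rightarrow> real) (us::nat \<Rightarrow> 'v list).
      (\<forall>k<m. length (us k) = n - 1) \<and>
      X = (\<lambda>w. \<Sum>k<m. c k *\<^sub>R Dop br (us k) w)}"

definition commutator :: "('v::real_vector \<Rightarrow> 'v) \<Rightarrow> ('v \<Rightarrow> 'v) \<Rightarrow> 'v \<Rightarrow> 'v" where
  "commutator A B = (\<lambda>w. A (B w) - B (A w))"

definition fadd :: "('a \<Rightarrow> 'v::real_vector) \<Rightarrow> ('a \<Rightarrow> 'v) \<Rightarrow> 'a \<Rightarrow> 'v" where
  "fadd f g = (\<lambda>x. f x + g x)"
definition fscale :: "real \<Rightarrow> ('a \<Rightarrow> 'v::real_vector) \<Rightarrow> 'a \<Rightarrow> 'v" where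
  "fscale c f = (\<lambda>x. c *\<^sub>R f x)"

definition fsubspace :: "('a \<Rightarrow> 'v::real_vector) set \<Rightarrow> bool" where
  "fsubspace G \<longleftrightarrow> (\<lambda>x. 0) \<in> G \<and> (\<forall>x\<in>G. \<forall>y\<in>G. fadd x y \<in> G) \<and>
     (\<forall>c. \<forall>x\<in>G. fscale c x \<in> G)"

definition bilinear_on ::
    "('a \<Rightarrow> 'v::real_vector) set \<Rightarrow> (('a \<Rightarrow> 'v) \<Rightarrow> ('a \<Rightarrow> 'v) \<Rightarrow> real) \<Rightarrow> bool" where
  "bilinear_on G b \<longleftrightarrow>
     (\<forall>x\<in>G. \<forall>y\<in>G. \<forall>z\<in>G. \<forall>a c.
        b (fadd (fscale a x) (fscale c y)) z = a * b x z + c * b y z \<and>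
        b z (fadd (fscale a x) (fscale c y)) = a * b z x + c * b z y)"

definition bilinear_op_on ::
    "('a \<Rightarrow> 'v::real_vector) set \<Rightarrow> (('a \<Rightarrow> 'v) \<Rightarrow> ('a \<Rightarrow> 'v) \<Rightarrow> ('a \<Rightarrow> 'v)) \<Rightarrow> bool" where
  "bilinear_op_on G b \<longleftrightarrow>
     (\<forall>x\<in>G. \<forall>y\<in>G. \<forall>z\<in>G. \<forall>a c.
        b (fadd (fscale a x) (fscale c y)) z = fadd (fscale a (b x z)) (fscale c (b y z)) \<and>
        b z (fadd (fscale a x) (fscale c y)) = fadd (fscale a (b z x)) (fscale c (b z y)))"

definition lie_algebra_on :: "('a \<Rightarrow> 'v::real_vector) set \<Rightarrow> (('a \<Rightarrow> 'v) \<Rightarrow> ('a \<Rightarrow> 'v) \<Rightarrow> ('a \<Rightarrow> 'v)) \<Rightarrow> bool" where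
  "lie_algebra_on G lb \<longleftrightarrow> fsubspace G \<and> (\<forall>x\<in>G. \<forall>y\<in>G. lb x y \<in> G) \<and>
     bilinear_op_on G lb \<and> (\<forall>x\<in>G. lb x x = (\<lambda>_. 0)) \<and>
     (\<forall>x\<in>G. \<forall>y\<in>G. \<forall>z\<in>G.
        fadd (fadd (lb x (lb y z)) (lb y (lb z x))) (lb z (lb x y)) = (\<lambda>_. 0))"

definition metric_lie_algebra ::
    "('a \<Rightarrow> 'v::real_vector) set \<Rightarrow> (('a \<Rightarrow> 'v) \<Rightarrow> ('a \<Rightarrow> 'v) \<Rightarrow> ('a \<Rightarrow> 'v))
     \<Rightarrow> (('a \<Rightarrow> 'v) \<Rightarrow> ('a \<Rightarrow> 'v) \<Rightarrow> real) \<Rightarrow> bool" where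
  "metric_lie_algebra G lb \<omega> \<longleftrightarrow> lie_algebra_on G lb \<and> bilinear_on G \<omega> \<and>
     (\<forall>x\<in>G. \<forall>y\<in>G. \<omega> x y = \<omega> y x) \<and>
     (\<forall>x\<in>G. (\<forall>y\<in>G. \<omega> x y = 0) \<longrightarrow> x = (\<lambda>_. 0)) \<and>
     (\<forall>x\<in>G. \<forall>y\<in>G. \<forall>z\<in>G. \<omega> (lb x y) z = - \<omega> y (lb x z))"

definition representation_on ::
    "('a \<Rightarrow> 'w::real_vector) set \<Rightarrow> (('a \<Rightarrow> 'w) \<Rightarrow> ('a \<Rightarrow> 'w) \<Rightarrow> ('a \<Rightarrow> 'w))
     \<Rightarrow> (('a \<Rightarrow> 'w) \<Rightarrow> 'v::real_vector \<Rightarrow> 'v) \<Rightarrow> bool" where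
  "representation_on G lb \<rho> \<longleftrightarrow>
     (\<forall>x\<in>G. linear (\<rho> x)) \<and>
     (\<forall>x\<in>G. \<forall>y\<in>G. \<forall>a c. \<rho> (fadd (fscale a x) (fscale c y)) = fadd (fscale a (\<rho> x)) (fscale c (\<rho> y))) \<and>
     (\<forall>x\<in>G. \<forall>y\<in>G. \<rho> (lb x y) = commutator (\<rho> x) (\<rho> y))"

definition gen_orthogonal ::
    "nat \<Rightarrow> ('v::real_vector list \<Rightarrow> real) \<Rightarrow> ('g set) \<Rightarrow> ('g \<Rightarrow> 'v \<Rightarrow> 'v) \<Rightarrow> bool" where
  "gen_orthogonal n S G \<rho> \<longleftrightarrow>
     (\<forall>x\<in>G. \<forall>ws. length ws = n - 1 \<longrightarrow> (\<Sum>i<n - 1. S (ws[i := \<rho> x (ws ! i)])) = 0)"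

definition lie_triple_data ::
    "nat \<Rightarrow> ('a \<Rightarrow> 'w::real_vector) set \<Rightarrow> (('a \<Rightarrow> 'w) \<Rightarrow> ('a \<Rightarrow> 'w) \<Rightarrow> ('a \<Rightarrow> 'w))
     \<Rightarrow> (('a \<Rightarrow> 'w) \<Rightarrow> ('a \<Rightarrow> 'w) \<Rightarrow> real) \<Rightarrow> ('v::real_vector list \<Rightarrow> real)
     \<Rightarrow> (('a \<Rightarrow> 'w) \<Rightarrow> 'v \<Rightarrow> 'v) \<Rightarrow> bool" where
  "lie_triple_data n G lb \<omega> S \<rho> \<longleftrightarrow>
     metric_lie_algebra G lb \<omega> \<and> symmetric_form (n - 1) S \<and> nondegenerate_form (n - 1) S \<and>
     representation_on G lb \<rho> \<and> inj_on \<rho> G \<and> gen_orthogonal n S G \<rho>"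

end

theory Submission
  imports Defs
begin

locale GML =
  fixes n :: nat and br :: "'v::euclidean_space list \<Rightarrow> 'v" and S :: "'v list \<Rightarrow> real"
  assumes n2: "n \<ge> 2" and gml: "gen_metric_leibniz n br S"
begin

abbreviation "D \<equiv> Dop br"
abbreviation "G \<equiv> ImD n br"

definition R :: "nat \<Rightarrow> (nat \<Rightarrow> real) \<Rightarrow> (nat \<Rightarrow> 'v list) \<Rightarrow> 'v \<Rightarrow> 'v" where
  "R m c u = (\<lambda>w. \<Sum>k<m. c k *\<^sub>R D (u k) w)"

definition valid :: "nat \<Rightarrow> (nat \<Rightarrow> 'v list) \<Rightarrow> bool" where
  "valid m u \<longleftrightarrow> (\<forall>k<m. length (u k) = n - 1)"

lemma ImD_iff: "X \<in> G \<longleftrightarrow> (\<exists>m c u. valid m u \<and> X = R m c u)"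
  by (auto simp: ImD_def R_def valid_def)

lemma mlbr: "multilinear n br" using gml by (simp add: gen_metric_leibniz_def n_leibniz_def)
lemma leib: "length us = n - 1 \<Longrightarrow> length vs = n \<Longrightarrow>
        br (us @ [br vs]) = (\<Sum>i<n. br (vs[i := br (us @ [vs ! i])]))"
  using gml by (simp add: gen_metric_leibniz_def n_leibniz_def)
lemma symS: "symmetric_form (n - 1) S" using gml by (simp add: gen_metric_leibniz_def)
lemma ndS: "nondegenerate_form (n - 1) S" using gml by (simp add: gen_metric_leibniz_def)
lemma unit: "length us = n - 1 \<Longrightarrow> length vs = n - 1 \<Longrightarrow>
        (\<Sum>i<n - 1. S (vs[i := br (us @ [vs ! i])])) = 0"
  using gml by (simp add: gen_metric_leibniz_def)
lemma symm: "length us = n - 1 \<Longrightarrow> length vs = n - 1 \<Longrightarrow>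
        S (br (us @ [hd vs]) # tl vs) = S (br (vs @ [hd us]) # tl us)"
  using gml by (simp add: gen_metric_leibniz_def)

lemma br_lin: assumes l: "length us = n - 1" shows "linear (\<lambda>y. br (us @ [y]))"
proof -
  have "length (us @ [0]) = n" "n - 1 < n" using l n2 by auto
  then have "linear (\<lambda>y. br ((us @ [0]) [n - 1 := y]))"
    using mlbr unfolding multilinear_def by blast
  moreover have "\<And>y. (us @ [0]) [n - 1 := y] = us @ [y]" using l by (simp add: list_update_append)
  ultimately show ?thesis by simp
qed

lemma D_lin: "length u = n - 1 \<Longrightarrow> linear (D u)"
  unfolding Dop_def using br_lin by simp

lemma S_lin: "length ws = n - 1 \<Longrightarrow> i < n - 1 \<Longrightarrow> linear (\<lambda>y. S (ws[i := y]))"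
  using symS unfolding symmetric_form_def multilinear_def by blast

lemma S_first: assumes "length t = n - 2" shows "linear (\<lambda>y. S (y # t))"
proof -
  have "length (0 # t) = n - 1" using assms n2 by simp
  moreover have "0 < n - 1" using n2 by simp
  ultimately have "linear (\<lambda>y. S ((0 # t)[0 := y]))" using S_lin by blast
  then show ?thesis by simp
qed

lemma R_Suc: "R (Suc m) c u = fadd (R m c u) (fscale (c m) (D (u m)))"
  by (simp add: R_def fadd_def fscale_def)
lemma R_0: "R 0 c u = (\<lambda>w. 0)" by (simp add: R_def)

lemma ImD_induct[consumes 1, case_names zero step]:
  assumes X: "X \<in> G" and z: "P (\<lambda>w. 0)"
    and st: "\<And>X c u. X \<in> G \<Longrightarrow> length u = n - 1 \<Longrightarrow> P X \<Longrightarrow> P (fadd X (fscale c (D u)))"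
  shows "P X"
proof -
  obtain m c u where v: "valid m u" and Xe: "X = R m c u" using X ImD_iff by blast
  have "valid m u \<Longrightarrow> P (R m c u)"
  proof (induction m)
    case 0 then show ?case using z R_0 by simp
  next
    case (Suc m)
    then have vm: "valid m u" and lu: "length (u m) = n - 1" by (auto simp: valid_def)
    have "R m c u \<in> G" using vm ImD_iff by blast
    then show ?case using st[OF _ lu Suc.IH[OF vm]] R_Suc by simp
  qed
  then show ?thesis using v Xe by simp
qed

lemma ImD_zero: "(\<lambda>w. 0) \<in> G"
  using ImD_iff[of "\<lambda>w. 0"] R_0 by (metis lessThan_0 lessThan_iff valid_def empty_iff)

lemma ImD_step: assumes "X \<in> G" "length u = n - 1" shows "fadd X (fscale a (D u)) \<in> G"
proof -
  obtain m c v where v: "valid m v" and Xe: "X = R m c v" using assms ImD_iff by blast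
  have "R m (c(m := a)) (v(m := u)) = R m c v" unfolding R_def by (intro ext sum.cong) auto
  then have "R (Suc m) (c(m := a)) (v(m := u)) = fadd X (fscale a (D u))" using Xe R_Suc by simp
  moreover have "valid (Suc m) (v(m := u))" using v assms(2) by (auto simp: valid_def less_Suc_eq)
  ultimately show ?thesis using ImD_iff by metis
qed

lemma ImD_D: assumes "length u = n - 1" shows "D u \<in> G"
proof -
  have "fadd (\<lambda>w. 0) (fscale 1 (D u)) = D u" by (simp add: fadd_def fscale_def)
  then show ?thesis using ImD_step[OF ImD_zero assms] by metis
qed

lemma ImD_add: assumes "X \<in> G" "Y \<in> G" shows "fadd X Y \<in> G"
  using assms(2)
proof (induction rule: ImD_induct)
  case zero then show ?case using assms(1) by (simp add: fadd_def)
next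
  case (step Y c u)
  have "fadd X (fadd Y (fscale c (D u))) = fadd (fadd X Y) (fscale c (D u))"
    by (simp add: fadd_def add.assoc)
  then show ?case using ImD_step step by simp
qed

lemma ImD_scale: assumes "X \<in> G" shows "fscale a X \<in> G"
  using assms
proof (induction rule: ImD_induct)
  case zero then show ?case using ImD_zero by (simp add: fscale_def)
next
  case (step X c u)
  have "fscale a (fadd X (fscale c (D u))) = fadd (fscale a X) (fscale (a * c) (D u))"
    by (simp add: fadd_def fscale_def scaleR_add_right)
  then show ?case using ImD_step step by simp
qed

lemma ImD_lin: assumes "X \<in> G" shows "linear X"
  using assms
proof (induction rule: ImD_induct)
  case zero then show ?case by (simp add: linear_zero)
next
  case (step X c u)
  have lD: "linear (D u)" using D_lin step by simp
  show ?case unfolding linear_iff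
  proof (intro conjI allI)
    fix x y :: 'v
    show "fadd X (fscale c (D u)) (x + y) = fadd X (fscale c (D u)) x + fadd X (fscale c (D u)) y"
      unfolding fadd_def fscale_def linear_add[OF step(3)] linear_add[OF lD]
      by (simp add: scaleR_add_right)
  next
    fix r :: real and x :: 'v
    show "fadd X (fscale c (D u)) (r *\<^sub>R x) = r *\<^sub>R fadd X (fscale c (D u)) x"
      unfolding fadd_def fscale_def linear_scale[OF step(3)] linear_scale[OF lD]
      by (simp add: scaleR_add_right)
  qed
qed

lemma comm_add_left: "linear z \<Longrightarrow> commutator (fadd x y) z = fadd (commutator x z) (commutator y z)"
  by (auto simp: commutator_def fadd_def linear_add algebra_simps)
lemma comm_scale_left: "linear z \<Longrightarrow> commutator (fscale a x) z = fscale a (commutator x z)"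
  by (auto simp: commutator_def fscale_def linear_scale algebra_simps)
lemma comm_add_right: "linear z \<Longrightarrow> commutator z (fadd x y) = fadd (commutator z x) (commutator z y)"
  by (auto simp: commutator_def fadd_def linear_add algebra_simps)
lemma comm_scale_right: "linear z \<Longrightarrow> commutator z (fscale a x) = fscale a (commutator z x)"
  by (auto simp: commutator_def fscale_def linear_scale algebra_simps)
lemma comm_zero_left: "linear z \<Longrightarrow> commutator (\<lambda>w. 0) z = (\<lambda>w. 0)"
  by (auto simp: commutator_def linear_0)
lemma comm_zero_right: "linear z \<Longrightarrow> commutator z (\<lambda>w. 0) = (\<lambda>w. 0)"
  by (auto simp: commutator_def linear_0)

lemma comm_DD: assumes lu: "length u = n - 1" and lv: "length v = n - 1"
  shows "commutator (D u) (D v) = R (n - 1) (\<lambda>_. 1) (\<lambda>i. v[i := D u (v ! i)])"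
proof
  fix w
  obtain k where nk: "n = Suc k" using n2 by (cases n) auto
  have lv': "length v = k" using lv nk by simp
  have lu': "length u = k" using lu nk by simp
  have "br (u @ [br (v @ [w])]) = (\<Sum>i<Suc k. br ((v @ [w])[i := br (u @ [(v @ [w]) ! i])]))"
    using leib[OF lu, of "v @ [w]"] lv nk by simp
  also have "\<dots> = (\<Sum>i<k. br ((v @ [w])[i := br (u @ [(v @ [w]) ! i])]))
         + br ((v @ [w])[k := br (u @ [(v @ [w]) ! k])])"
    by (rule sum.lessThan_Suc)
  also have "br ((v @ [w])[k := br (u @ [(v @ [w]) ! k])]) = br (v @ [br (u @ [w])])"
    using lv' by (simp add: list_update_append nth_append)
  also have "(\<Sum>i<k. br ((v @ [w])[i := br (u @ [(v @ [w]) ! i])]))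
       = (\<Sum>i<k. br (v[i := br (u @ [v ! i])] @ [w]))"
    using lv' by (intro sum.cong refl) (simp add: list_update_append nth_append)
  finally have "br (u @ [br (v @ [w])]) = (\<Sum>i<k. br (v[i := br (u @ [v ! i])] @ [w])) + br (v @ [br (u @ [w])])" .
  then show "commutator (D u) (D v) w = R (n - 1) (\<lambda>_. 1) (\<lambda>i. v[i := D u (v ! i)]) w"
    using nk by (simp add: commutator_def R_def Dop_def)
qed

lemma valid_DD: "length v = n - 1 \<Longrightarrow> valid (n - 1) (\<lambda>i. v[i := D u (v ! i)])"
  by (simp add: valid_def)

lemma comm_DD_in: "length u = n - 1 \<Longrightarrow> length v = n - 1 \<Longrightarrow> commutator (D u) (D v) \<in> G"
  using comm_DD valid_DD ImD_iff by metis

lemma comm_closed: assumes "X \<in> G" "Y \<in> G" shows "commutator X Y \<in> G"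
proof -
  have Dl: "commutator (D u) Y \<in> G" if lu: "length u = n - 1" and Y: "Y \<in> G" for u Y
    using Y
  proof (induction rule: ImD_induct)
    case zero then show ?case using comm_zero_right[OF D_lin[OF lu]] ImD_zero by simp
  next
    case (step Y c v)
    have e: "commutator (D u) (fadd Y (fscale c (D v)))
       = fadd (commutator (D u) Y) (fscale c (commutator (D u) (D v)))"
      using comm_add_right[OF D_lin[OF lu]] comm_scale_right[OF D_lin[OF lu]] by simp
    have "commutator (D u) (D v) \<in> G" using comm_DD_in lu step(2) by simp
    then show ?case unfolding e by (intro ImD_add ImD_scale step.IH)
  qed
  have lY: "linear Y" using ImD_lin assms(2) by simp
  show ?thesis using assms(1)
  proof (induction rule: ImD_induct)
    case zero then show ?case using comm_zero_left[OF lY] ImD_zero by simp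
  next
    case (step X c u)
    have e: "commutator (fadd X (fscale c (D u))) Y
       = fadd (commutator X Y) (fscale c (commutator (D u) Y))"
      using comm_add_left[OF lY] comm_scale_left[OF lY] by simp
    have "commutator (D u) Y \<in> G" using Dl step(2) assms(2) by simp
    then show ?case unfolding e by (intro ImD_add ImD_scale step.IH)
  qed
qed

definition phi :: "('v \<Rightarrow> 'v) \<Rightarrow> 'v list \<Rightarrow> real" where
  "phi X v = S (X (hd v) # tl v)"

lemma phi_R: assumes "length v = n - 1"
  shows "phi (R m c u) v = (\<Sum>k<m. c k * S (br (u k @ [hd v]) # tl v))"
proof -
  have lin: "linear (\<lambda>y. S (y # tl v))" using S_first assms by simp
  have "phi (R m c u) v = S ((\<Sum>k<m. c k *\<^sub>R br (u k @ [hd v])) # tl v)"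
    by (simp add: phi_def R_def Dop_def)
  also have "\<dots> = (\<Sum>k<m. S ((c k *\<^sub>R br (u k @ [hd v])) # tl v))"
    using linear_sum[OF lin, of "\<lambda>k. c k *\<^sub>R br (u k @ [hd v])" "{..<m}"] by simp
  also have "\<dots> = (\<Sum>k<m. c k * S (br (u k @ [hd v]) # tl v))"
    using linear_scale[OF lin] by simp
  finally show ?thesis .
qed

lemma KL: assumes vu: "valid m u" and vv: "valid p v"
  shows "(\<Sum>l<p. d l * phi (R m c u) (v l)) = (\<Sum>k<m. c k * phi (R p d v) (u k))"
proof -
  have "(\<Sum>l<p. d l * phi (R m c u) (v l))
      = (\<Sum>l<p. \<Sum>k<m. d l * c k * S (br (u k @ [hd (v l)]) # tl (v l)))"
    using vv by (auto simp: phi_R valid_def sum_distrib_left mult.assoc intro!: sum.cong)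
  also have "\<dots> = (\<Sum>l<p. \<Sum>k<m. d l * c k * S (br (v l @ [hd (u k)]) # tl (u k)))"
    using vu vv by (auto simp: valid_def symm intro!: sum.cong)
  also have "\<dots> = (\<Sum>k<m. \<Sum>l<p. c k * d l * S (br (v l @ [hd (u k)]) # tl (u k)))"
    by (subst sum.swap) (simp add: mult.commute mult.left_commute)
  also have "\<dots> = (\<Sum>k<m. c k * phi (R p d v) (u k))"
    using vu by (auto simp: phi_R valid_def sum_distrib_left mult.assoc intro!: sum.cong)
  finally show ?thesis .
qed

definition om :: "('v \<Rightarrow> 'v) \<Rightarrow> ('v \<Rightarrow> 'v) \<Rightarrow> real" where
  "om X Y = (let t = (SOME t. valid (fst t) (snd (snd t)) \<and> X = R (fst t) (fst (snd t)) (snd (snd t)))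
     in \<Sum>k<fst t. fst (snd t) k * phi Y (snd (snd t) k))"

lemma om_rep1: assumes v: "valid m u" and Xe: "X = R m c u" and Y: "Y \<in> G"
  shows "om X Y = (\<Sum>k<m. c k * phi Y (u k))"
proof -
  define P where "P t \<longleftrightarrow> valid (fst t) (snd (snd t)) \<and> X = R (fst t) (fst (snd t)) (snd (snd t))"
    for t :: "nat \<times> (nat \<Rightarrow> real) \<times> (nat \<Rightarrow> 'v list)"
  have "P (m, c, u)" using v Xe by (simp add: P_def)
  then have "P (SOME t. P t)" by (rule someI)
  moreover obtain m' c' u' where tt: "(SOME t. P t) = (m', c', u')" by (metis prod.exhaust)
  ultimately have v': "valid m' u'" and X': "X = R m' c' u'" by (auto simp: P_def)
  have "om X Y = (\<Sum>k<m'. c' k * phi Y (u' k))"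
    unfolding om_def P_def[symmetric] tt by simp
  obtain p d w where vw: "valid p w" and Ye: "Y = R p d w" using Y ImD_iff by blast
  have "(\<Sum>k<m'. c' k * phi Y (u' k)) = (\<Sum>l<p. d l * phi X (w l))"
    using KL[OF v' vw, of d c'] X' Ye by simp
  also have "\<dots> = (\<Sum>k<m. c k * phi Y (u k))"
    using KL[OF v vw, of d c] Xe Ye by simp
  finally show ?thesis using \<open>om X Y = _\<close> by simp
qed

lemma om_rep2: assumes X: "X \<in> G" and v: "valid p w" and Ye: "Y = R p d w"
  shows "om X Y = (\<Sum>l<p. d l * phi X (w l))"
proof -
  obtain m c u where vu: "valid m u" and Xe: "X = R m c u" using X ImD_iff by blast
  have Y: "Y \<in> G" using v Ye ImD_iff by blast
  show ?thesis using om_rep1[OF vu Xe Y] KL[OF vu v, of d c] Xe Ye by simp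
qed

lemma R_one: "D t = R 1 (\<lambda>_. 1) (\<lambda>_. t)"
  by (simp add: R_def)

lemma om_D: assumes "X \<in> G" "length t = n - 1" shows "om X (D t) = phi X t"
  using om_rep2[OF assms(1) _ R_one, of t] assms(2) by (simp add: valid_def)

lemma om_zero_right: assumes "X \<in> G" shows "om X (\<lambda>w. 0) = 0"
  using om_rep2[OF assms(1), of 0 "\<lambda>_. []" "\<lambda>w. 0" "\<lambda>_. 0"] by (simp add: valid_def R_0)

lemma phi_lin: assumes "length v = n - 1"
  shows "phi (fadd (fscale a x) (fscale c y)) v = a * phi x v + c * phi y v"
proof -
  have lin: "linear (\<lambda>y. S (y # tl v))" using S_first assms by simp
  show ?thesis unfolding phi_def fadd_def fscale_def
    using linear_add[OF lin] linear_scale[OF lin] by simp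
qed

lemma om_lin_left: assumes "x \<in> G" "y \<in> G" "z \<in> G"
  shows "om (fadd (fscale a x) (fscale c y)) z = a * om x z + c * om y z"
proof -
  obtain p d w where vw: "valid p w" and ze: "z = R p d w" using assms(3) ImD_iff by blast
  have xy: "fadd (fscale a x) (fscale c y) \<in> G" using assms ImD_add ImD_scale by simp
  show ?thesis
    using om_rep2[OF xy vw ze] om_rep2[OF assms(1) vw ze] om_rep2[OF assms(2) vw ze] vw
    by (simp add: phi_lin valid_def sum_distrib_left sum.distrib algebra_simps)
qed

lemma om_lin_right: assumes "x \<in> G" "y \<in> G" "z \<in> G"
  shows "om z (fadd (fscale a x) (fscale c y)) = a * om z x + c * om z y"
proof -
  obtain p d w where vw: "valid p w" and ze: "z = R p d w" using assms(3) ImD_iff by blast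
  have xy: "fadd (fscale a x) (fscale c y) \<in> G" using assms ImD_add ImD_scale by simp
  have "om z (fadd (fscale a x) (fscale c y)) = (\<Sum>k<p. d k * phi (fadd (fscale a x) (fscale c y)) (w k))"
    using om_rep1[OF vw ze xy] .
  also have "\<dots> = a * (\<Sum>k<p. d k * phi x (w k)) + c * (\<Sum>k<p. d k * phi y (w k))"
    using vw by (simp add: phi_lin valid_def sum_distrib_left sum.distrib algebra_simps)
  finally show ?thesis using om_rep1[OF vw ze assms(1)] om_rep1[OF vw ze assms(2)] by simp
qed

lemma fscale1: "fscale 1 x = x" by (simp add: fscale_def)

lemma om_add_left: "x \<in> G \<Longrightarrow> y \<in> G \<Longrightarrow> z \<in> G \<Longrightarrow> om (fadd x (fscale c y)) z = om x z + c * om y z"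
  using om_lin_left[of x y z 1 c] by (simp add: fscale1)
lemma om_add_right: "x \<in> G \<Longrightarrow> y \<in> G \<Longrightarrow> z \<in> G \<Longrightarrow> om z (fadd x (fscale c y)) = om z x + c * om z y"
  using om_lin_right[of x y z 1 c] by (simp add: fscale1)

lemma om_sym: assumes "x \<in> G" "y \<in> G" shows "om x y = om y x"
proof -
  obtain m c u where vu: "valid m u" and Xe: "x = R m c u" using assms(1) ImD_iff by blast
  show ?thesis using om_rep1[OF vu Xe assms(2)] om_rep2[OF assms(2) vu Xe] by simp
qed

lemma om_nd: assumes x: "x \<in> G" and h: "\<forall>y\<in>G. om x y = 0" shows "x = (\<lambda>_. 0)"
proof
  fix w
  have "S (x w # vs) = 0" if "length vs = n - 1 - 1" for vs
  proof -
    have l: "length (w # vs) = n - 1" using that n2 by simp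
    have "om x (D (w # vs)) = 0" using h ImD_D[OF l] by blast
    then show ?thesis using om_D[OF x l] by (simp add: phi_def)
  qed
  then show "x w = 0" using ndS unfolding nondegenerate_form_def by blast
qed

lemma inv_base: assumes lu: "length u = n - 1" and lt: "length t = n - 1" and y: "y \<in> G"
  shows "om (commutator (D u) y) (D t) = - om y (commutator (D u) (D t))"
proof -
  obtain k where nk: "n = Suc (Suc k)" using n2 by (metis add_2_eq_Suc le_Suc_ex)
  have k: "n - 1 = Suc k" using nk by simp
  obtain h \<tau> where te: "t = h # \<tau>" using lt k by (cases t) auto
  have lta: "length \<tau> = k" using lt k te by simp
  have lin: "linear (\<lambda>z. S (z # \<tau>))" using S_first[of \<tau>] lta nk by simp
  have cy: "commutator (D u) y \<in> G" using comm_closed ImD_D[OF lu] y by simp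
  have "om (commutator (D u) y) (D t) = S ((D u (y h) - y (D u h)) # \<tau>)"
    using om_D[OF cy lt] te by (simp add: phi_def commutator_def)
  also have "\<dots> = S (D u (y h) # \<tau>) - S (y (D u h) # \<tau>)"
    using linear_diff[OF lin] by simp
  finally have L: "om (commutator (D u) y) (D t) = S (D u (y h) # \<tau>) - S (y (D u h) # \<tau>)" .
  have "om y (commutator (D u) (D t)) = (\<Sum>i<n - 1. 1 * phi y (t[i := D u (t ! i)]))"
    using om_rep2[OF y valid_DD[OF lt] comm_DD[OF lu lt]] .
  also have "\<dots> = (\<Sum>i<Suc k. phi y (t[i := D u (t ! i)]))" using k by simp
  also have "\<dots> = S (y (D u h) # \<tau>) + (\<Sum>j<k. S (y h # \<tau>[j := D u (\<tau> ! j)]))"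
    by (subst sum.lessThan_Suc_shift) (simp add: te phi_def)
  finally have R1: "om y (commutator (D u) (D t)) = S (y (D u h) # \<tau>) + (\<Sum>j<k. S (y h # \<tau>[j := D u (\<tau> ! j)]))" .
  have "(\<Sum>i<n - 1. S ((y h # \<tau>)[i := br (u @ [(y h # \<tau>) ! i])])) = 0"
    using unit[OF lu, of "y h # \<tau>"] lt te by simp
  then have "(\<Sum>i<Suc k. S ((y h # \<tau>)[i := br (u @ [(y h # \<tau>) ! i])])) = 0" using k by simp
  then have U: "S (D u (y h) # \<tau>) + (\<Sum>j<k. S (y h # \<tau>[j := D u (\<tau> ! j)])) = 0"
    by (subst (asm) sum.lessThan_Suc_shift) (simp add: Dop_def)
  show ?thesis using L R1 U by simp
qed

lemma inv_D: assumes x: "x \<in> G" and lt: "length t = n - 1" and y: "y \<in> G"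
  shows "om (commutator x y) (D t) = - om y (commutator x (D t))"
  using x y
proof (induction x arbitrary: y rule: ImD_induct)
  case zero
  have "om (commutator (\<lambda>w. 0) y) (D t) = 0"
    using comm_zero_left[OF ImD_lin[OF zero]] om_D[OF ImD_zero lt] lt n2
      linear_0[OF S_first[of "tl t"]]
    by (simp add: phi_def)
  moreover have "om y (commutator (\<lambda>w. 0) (D t)) = 0"
    using comm_zero_left[OF D_lin[OF lt]] om_zero_right[OF zero] by simp
  ultimately show ?case by simp
next
  case (step X c u y)
  have ly: "linear y" using ImD_lin step by simp
  have lD: "linear (D t)" using D_lin lt by simp
  have DG: "D u \<in> G" "D t \<in> G" using ImD_D step lt by auto
  have "om (commutator (fadd X (fscale c (D u))) y) (D t)
      = om (fadd (commutator X y) (fscale c (commutator (D u) y))) (D t)"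
    using comm_add_left[OF ly] comm_scale_left[OF ly] by simp
  also have "\<dots> = om (commutator X y) (D t) + c * om (commutator (D u) y) (D t)"
    using om_add_left comm_closed step DG by simp
  finally have A: "om (commutator (fadd X (fscale c (D u))) y) (D t)
      = om (commutator X y) (D t) + c * om (commutator (D u) y) (D t)" .
  have "om y (commutator (fadd X (fscale c (D u))) (D t))
      = om y (fadd (commutator X (D t)) (fscale c (commutator (D u) (D t))))"
    using comm_add_left[OF lD] comm_scale_left[OF lD] by simp
  also have "\<dots> = om y (commutator X (D t)) + c * om y (commutator (D u) (D t))"
    using om_add_right comm_closed step DG by simp
  finally have B: "om y (commutator (fadd X (fscale c (D u))) (D t))
      = om y (commutator X (D t)) + c * om y (commutator (D u) (D t))" .
  show ?case using A B step.IH[OF step(4)] inv_base[OF step(2) lt step(4)] by simp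
qed

lemma inv: assumes x: "x \<in> G" and z: "z \<in> G" and y: "y \<in> G"
  shows "om (commutator x y) z = - om y (commutator x z)"
  using z
proof (induction rule: ImD_induct)
  case zero
  show ?case using om_zero_right comm_closed x y comm_zero_right[OF ImD_lin[OF x]] by simp
next
  case (step Z c t)
  have lx: "linear x" using ImD_lin x by simp
  have DG: "D t \<in> G" using ImD_D step by auto
  have cxy: "commutator x y \<in> G" using comm_closed x y by simp
  have A: "om (commutator x y) (fadd Z (fscale c (D t)))
     = om (commutator x y) Z + c * om (commutator x y) (D t)"
    using om_add_right[OF step(1) DG cxy] .
  have "om y (commutator x (fadd Z (fscale c (D t))))
      = om y (fadd (commutator x Z) (fscale c (commutator x (D t))))"
    using comm_add_right[OF lx] comm_scale_right[OF lx] by simp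
  also have "\<dots> = om y (commutator x Z) + c * om y (commutator x (D t))"
    using om_add_right comm_closed x step DG y by simp
  finally show ?case using A step.IH inv_D[OF x step(2) y] by simp
qed

lemma gen_orth: "gen_orthogonal n S G id"
  unfolding gen_orthogonal_def
proof (intro ballI allI impI)
  fix x ws assume x: "x \<in> G" and lw: "length (ws :: 'v list) = n - 1"
  show "(\<Sum>i<n - 1. S (ws[i := id x (ws ! i)])) = 0"
    using x
  proof (induction rule: ImD_induct)
    case zero
    show ?case using linear_0[OF S_lin[OF lw]] by simp
  next
    case (step X c u)
    have "(\<Sum>i<n - 1. S (ws[i := id (fadd X (fscale c (D u))) (ws ! i)]))
        = (\<Sum>i<n - 1. S (ws[i := id X (ws ! i)]) + c * S (ws[i := br (u @ [ws ! i])]))"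
    proof (intro sum.cong refl)
      fix i assume "i \<in> {..<n - 1}"
      then have li: "linear (\<lambda>y. S (ws[i := y]))" using S_lin lw by simp
      show "S (ws[i := id (fadd X (fscale c (D u))) (ws ! i)])
          = S (ws[i := id X (ws ! i)]) + c * S (ws[i := br (u @ [ws ! i])])"
        using linear_add[OF li] linear_scale[OF li] by (simp add: fadd_def fscale_def Dop_def)
    qed
    also have "\<dots> = 0"
      using step.IH unit[OF step(2) lw] by (simp add: sum.distrib sum_distrib_left[symmetric])
    finally show ?case .
  qed
qed

lemma lie: "lie_algebra_on G commutator"
  unfolding lie_algebra_on_def fsubspace_def bilinear_op_on_def
proof (intro conjI ballI allI)
  show "(\<lambda>x. 0) \<in> G" by (rule ImD_zero)
next
  fix x y assume "x \<in> G" "y \<in> G" then show "fadd x y \<in> G" by (rule ImD_add)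
next
  fix c x assume "x \<in> G" then show "fscale c x \<in> G" by (rule ImD_scale)
next
  fix x y assume "x \<in> G" "y \<in> G" then show "commutator x y \<in> G" by (rule comm_closed)
next
  fix x y z a c assume "x \<in> G" "y \<in> G" "z \<in> G"
  then have lz: "linear z" by (simp add: ImD_lin)
  show "commutator (fadd (fscale a x) (fscale c y)) z
     = fadd (fscale a (commutator x z)) (fscale c (commutator y z))"
    using comm_add_left[OF lz] comm_scale_left[OF lz] by simp
  show "commutator z (fadd (fscale a x) (fscale c y))
     = fadd (fscale a (commutator z x)) (fscale c (commutator z y))"
    using comm_add_right[OF lz] comm_scale_right[OF lz] by simp
next
  fix x show "commutator x x = (\<lambda>_. 0)" by (simp add: commutator_def)
next
  fix x y z assume "x \<in> G" "y \<in> G" "z \<in> G"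
  then have lx: "linear x" and ly: "linear y" and lz: "linear z" by (auto simp: ImD_lin)
  show "fadd (fadd (commutator x (commutator y z)) (commutator y (commutator z x)))
          (commutator z (commutator x y)) = (\<lambda>_. 0)"
    by (simp add: fadd_def commutator_def linear_diff[OF lx] linear_diff[OF ly] linear_diff[OF lz])
qed

lemma metric: "metric_lie_algebra G commutator om"
  unfolding metric_lie_algebra_def bilinear_on_def
  using lie om_lin_left om_lin_right om_sym om_nd inv by blast

lemma main: "\<exists>\<omega>. (\<forall>us vs. length us = n - 1 \<longrightarrow> length vs = n - 1 \<longrightarrow>
               \<omega> (Dop br us) (Dop br vs) = S (br (us @ [hd vs]) # tl vs)) \<and>
             lie_triple_data n (ImD n br) commutator \<omega> S id"
proof (intro exI conjI allI impI)
  fix us vs :: "'v list" assume "length us = n - 1" "length vs = n - 1"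
  then show "om (D us) (D vs) = S (br (us @ [hd vs]) # tl vs)"
    using om_D ImD_D by (simp add: phi_def Dop_def)
next
  show "lie_triple_data n G commutator om S id"
    unfolding lie_triple_data_def representation_on_def
    using metric symS ndS gen_orth ImD_lin by (auto simp: commutator_def)
qed

end

theorem mainTheorem5:
  fixes n :: nat
    and br :: "'v::euclidean_space list \<Rightarrow> 'v"
    and S :: "'v list \<Rightarrow> real"
  assumes "n \<ge> 2"
    and "gen_metric_leibniz n br S"
  shows "\<exists>\<omega>. (\<forall>us vs. length us = n - 1 \<longrightarrow> length vs = n - 1 \<longrightarrow>
               \<omega> (Dop br us) (Dop br vs) = S (br (us @ [hd vs]) # tl vs)) \<and>
             lie_triple_data n (ImD n br) commutator \<omega> S id"
proof -
  interpret GML n br S using assms by unfold_locales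
  show ?thesis by (rule main)
qed

end
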